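(* Let $E\subset\mathbb{Q}_p$ be a non-empty finite set and $\nu=\sum_{x\in E}\alpha_x\delta_x$ with $\alpha_x\in\mathbb{Z}\setminus\{0\}$. If $\xi\in\mathbb{Q}_p\setminus\{0\}$ satisfies $\widehat\nu(\xi)=0$, then for every $x\in E$ there exists $x'\in E$ with $x'\neq x$ and $|x-x'|_p\le p/|\xi|_p$.
   Context: $\chi(x)=e^{2\pi i\{x\}}$ with $\{x\}$ the $p$-adic fractional part of $x$; $\widehat\nu(\xi)=\sum_{x\in E}\alpha_x\overline{\chi(\xi x)}$. *)

theory Defs
  imports Complex_Main "HOL-Computational_Algebra.Primes"
begin

text \<open>We represent an element of Q_p by its
  canonical (unique) p-adic digit expansion  x = sum_{n in Z} a(n) p^n,
  with digits 0 <= a(n) < p and a(n) = 0 for all sufficiently negative n.\<close>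

definition padic :: "nat \<Rightarrow> (int \<Rightarrow> int) \<Rightarrow> bool" where
  "padic p a \<longleftrightarrow> (\<forall>n. 0 \<le> a n \<and> a n < int p) \<and> (\<exists>N. \<forall>n<N. a n = 0)"

text \<open>Truncation: the rational number sum_{n < m} a(n) p^n (x modulo p^m Z_p).\<close>
definition ptrunc :: "nat \<Rightarrow> (int \<Rightarrow> int) \<Rightarrow> int \<Rightarrow> rat" where
  "ptrunc p a m = (\<Sum>n\<in>{n. n < m \<and> a n \<noteq> 0}. of_int (a n) * of_nat p powi n)"

definition pcong :: "nat \<Rightarrow> int \<Rightarrow> rat \<Rightarrow> rat \<Rightarrow> bool" where
  "pcong p m q r \<longleftrightarrow> (\<exists>k::int. q - r = of_int k * of_nat p powi m)"

definition plim :: "nat \<Rightarrow> (int \<Rightarrow> rat) \<Rightarrow> (int \<Rightarrow> int)" where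
  "plim p s = (THE c. padic p c \<and>
      (\<forall>m. \<exists>M. \<forall>m'\<ge>M. pcong p m (ptrunc p c m) (s m')))"

definition psub :: "nat \<Rightarrow> (int \<Rightarrow> int) \<Rightarrow> (int \<Rightarrow> int) \<Rightarrow> (int \<Rightarrow> int)" where
  "psub p a b = plim p (\<lambda>m. ptrunc p a m - ptrunc p b m)"

definition pmult :: "nat \<Rightarrow> (int \<Rightarrow> int) \<Rightarrow> (int \<Rightarrow> int) \<Rightarrow> (int \<Rightarrow> int)" where
  "pmult p a b = plim p (\<lambda>m. ptrunc p a m * ptrunc p b m)"

definition pabs :: "nat \<Rightarrow> (int \<Rightarrow> int) \<Rightarrow> real" where
  "pabs p a = (if \<forall>n. a n = 0 then 0 else real p powi (- (LEAST n::int. a n \<noteq> 0)))"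

definition pfrac :: "nat \<Rightarrow> (int \<Rightarrow> int) \<Rightarrow> real" where
  "pfrac p a = real_of_rat (ptrunc p a 0)"

definition pchar :: "nat \<Rightarrow> (int \<Rightarrow> int) \<Rightarrow> complex" where
  "pchar p a = exp (2 * complex_of_real pi * \<i> * complex_of_real (pfrac p a))"

definition nu_hat :: "nat \<Rightarrow> (int \<Rightarrow> int) set \<Rightarrow> ((int \<Rightarrow> int) \<Rightarrow> int) \<Rightarrow> (int \<Rightarrow> int) \<Rightarrow> complex" where
  "nu_hat p E \<alpha> \<xi> = (\<Sum>x\<in>E. of_int (\<alpha> x) * cnj (pchar p (pmult p \<xi> x)))"

end

theory Submission
  imports Defs "HOL-Computational_Algebra.Polynomial_Factorial"
begin


definition pcg :: "int \<Rightarrow> int poly \<Rightarrow> int poly \<Rightarrow> bool" where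
  "pcg p F G \<longleftrightarrow> (\<forall>i. p dvd coeff (F - G) i)"

lemma pcg_smult: "pcg p F G \<longleftrightarrow> (\<exists>H. F - G = smult p H)"
proof
  assume "pcg p F G"
  then have "F - G = smult p (map_poly (\<lambda>c. c div p) (F - G))"
    unfolding pcg_def by (intro poly_eqI) (auto simp: coeff_map_poly)
  then show "\<exists>H. F - G = smult p H" by blast
qed (auto simp: pcg_def, metis coeff_diff coeff_smult dvd_triv_left)

lemma pcg_refl: "pcg p F F" by (simp add: pcg_def)
lemma pcg_sym: "pcg p F G \<Longrightarrow> pcg p G F"
proof -
  assume "pcg p F G" then obtain H where "F - G = smult p H" unfolding pcg_smult by blast
  then have "G - F = smult p (- H)" by (metis minus_diff_eq smult_minus_right)
  then show ?thesis unfolding pcg_smult by blast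
qed
lemma pcg_trans: "pcg p F G \<Longrightarrow> pcg p G H \<Longrightarrow> pcg p F H"
proof -
  assume "pcg p F G" "pcg p G H"
  then obtain H1 H2 where "F - G = smult p H1" "G - H = smult p H2" unfolding pcg_smult by blast
  then have "F - H = smult p (H1 + H2)" by (simp add: smult_add_right)
  then show ?thesis unfolding pcg_smult by blast
qed
lemma pcg_add: "pcg p F G \<Longrightarrow> pcg p A B \<Longrightarrow> pcg p (F + A) (G + B)"
proof -
  assume "pcg p F G" "pcg p A B"
  then obtain H1 H2 where "F - G = smult p H1" "A - B = smult p H2" unfolding pcg_smult by blast
  then have "(F + A) - (G + B) = smult p (H1 + H2)" by (simp add: smult_add_right)
  then show ?thesis unfolding pcg_smult by blast
qed
lemma pcg_diff: "pcg p F G \<Longrightarrow> pcg p A B \<Longrightarrow> pcg p (F - A) (G - B)"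
proof -
  assume "pcg p F G" "pcg p A B"
  then obtain H1 H2 where "F - G = smult p H1" "A - B = smult p H2" unfolding pcg_smult by blast
  then have "(F - A) - (G - B) = smult p (H1 - H2)" by (simp add: smult_diff_right)
  then show ?thesis unfolding pcg_smult by blast
qed
lemma pcg_mult: "pcg p F G \<Longrightarrow> pcg p A B \<Longrightarrow> pcg p (F * A) (G * B)"
proof -
  assume "pcg p F G" "pcg p A B"
  then obtain H1 H2 where "F - G = smult p H1" "A - B = smult p H2" unfolding pcg_smult by blast
  then have "F * A - G * B = smult p (H1 * A + G * H2)"
    by (simp add: algebra_simps smult_add_right)
  then show ?thesis unfolding pcg_smult by blast
qed
lemma pcg_power: "pcg p F G \<Longrightarrow> pcg p (F ^ n) (G ^ n)"
  by (induction n) (auto simp: pcg_refl pcg_mult)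
lemma pcg_pcompose: "pcg p F G \<Longrightarrow> pcg p (pcompose F R) (pcompose G R)"
  proof -
  assume "pcg p F G" then obtain H where "F - G = smult p H" unfolding pcg_smult by blast
  then have "pcompose F R - pcompose G R = smult p (pcompose H R)" by (metis pcompose_diff pcompose_smult)
  then show ?thesis unfolding pcg_smult by blast
qed

lemma pcompose_power_left: "pcompose (F ^ n) R = (pcompose F R) ^ n"
  by (induction n) (auto simp: pcompose_mult pcompose_1)

lemma pcompose_monom1: "pcompose (monom 1 n) R = R ^ n"
proof -
  have "monom 1 n = (monom 1 1) ^ n" by (simp add: monom_power)
  moreover have "pcompose (monom 1 1) R = R"
    by (simp add: monom_Suc pcompose_pCons monom_0)
  ultimately show ?thesis by (metis pcompose_power_left)
qed

lemma freshman_p: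
  assumes "prime (p::nat)"
  shows "pcg (int p) ([:1,1:] ^ p) (monom 1 p + 1)"
  unfolding pcg_def
proof
  fix i
  have c: "coeff ([:1,1::int:] ^ p) i = int (p choose i)"
  proof (cases "i \<le> p")
    case True then show ?thesis by (simp add: coeff_linear_poly_power)
  next
    case False
    have "degree ([:1,1::int:] ^ p) \<le> p" using degree_power_le[of "[:1,1::int:]" p] by simp
    then show ?thesis using False by (simp add: coeff_eq_0 binomial_eq_0)
  qed
  have p0: "p \<noteq> 0" using assms by auto
  show "int p dvd coeff ([:1, 1:] ^ p - (monom 1 p + 1)) i"
  proof (cases "i = 0 \<or> i \<ge> p")
    case True
    then show ?thesis using p0 by (auto simp: c coeff_monom binomial_eq_0)
  next
    case False
    then have "p dvd (p choose i)" using dvd_choose_prime assms p0 by auto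
    then show ?thesis using False by (auto simp: c coeff_monom)
  qed
qed

lemma pcompose_X1: "pcompose [:1,1::int:] R = 1 + R"
  by (simp add: pcompose_pCons one_pCons)

lemma fresh_pow:
  assumes "prime (p::nat)"
  shows "pcg (int p) ([:1,1:] ^ (p ^ k)) (monom 1 (p ^ k) + 1)"
proof (induction k)
  case 0
  have "[:1,1::int:] = monom 1 1 + 1" by (simp add: monom_Suc monom_0 one_pCons)
  then show ?case by (simp add: pcg_refl)
next
  case (Suc k)
  have e1: "[:1,1::int:] ^ (p ^ Suc k) = ([:1,1:] ^ (p ^ k)) ^ p"
    by (metis power_Suc2 power_mult)
  have c1: "pcg (int p) (([:1,1:] ^ (p ^ k)) ^ p) ((monom 1 (p ^ k) + 1) ^ p)"
    using Suc by (rule pcg_power)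
  have e2: "(monom 1 (p ^ k) + 1) ^ p = pcompose ([:1,1::int:] ^ p) (monom 1 (p ^ k))"
    unfolding pcompose_power_left pcompose_X1 by (simp only: add.commute)
  have c2: "pcg (int p) (pcompose ([:1,1::int:] ^ p) (monom 1 (p ^ k))) (pcompose (monom 1 p + 1) (monom 1 (p ^ k)))"
    by (rule pcg_pcompose[OF freshman_p[OF assms]])
  have e3: "pcompose (monom 1 p + 1) (monom 1 (p ^ k)) = monom (1::int) (p ^ Suc k) + 1"
    unfolding pcompose_add pcompose_monom1 pcompose_1 monom_power by (simp add: mult.commute)
  have "pcg (int p) ([:1,1::int:] ^ (p ^ Suc k)) ((monom 1 (p ^ k) + 1) ^ p)"
    using c1 e1 by simp
  then have "pcg (int p) ([:1,1::int:] ^ (p ^ Suc k)) (pcompose (monom 1 p + 1) (monom 1 (p ^ k)))"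
    using c2 e2 pcg_trans by simp
  then show ?case using e3 by simp
qed

definition Phi :: "nat \<Rightarrow> nat \<Rightarrow> int poly" where
  "Phi p M = (\<Sum>t<p. monom 1 (t * M))"

lemma Phi_telescope: "Phi p M * (monom 1 M - 1) = monom 1 (p * M) - 1"
proof -
  have "Phi p M * (monom 1 M - 1) = (\<Sum>t<p. monom 1 (Suc t * M) - monom 1 (t * M))"
    unfolding Phi_def sum_distrib_right by (intro sum.cong) (auto simp: algebra_simps mult_monom)
  also have "\<dots> = monom 1 (p * M) - 1"
    by (subst sum_lessThan_telescope[where f = "\<lambda>t. monom (1::int) (t * M)"]) (simp add: monom_0 one_pCons)
  finally show ?thesis .
qed

lemma coeff_Phi: "coeff (Phi p M) n = (\<Sum>t<p. if t * M = n then 1 else 0)"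
  by (simp add: Phi_def coeff_sum coeff_monom)

lemma Phi_top:
  assumes "p \<ge> 1" "M \<ge> 1"
  shows "coeff (Phi p M) ((p - 1) * M) = 1" "degree (Phi p M) = (p - 1) * M"
proof -
  have eq: "t * M = (p - 1) * M \<longleftrightarrow> t = p - 1" for t using assms by auto
  show c: "coeff (Phi p M) ((p - 1) * M) = 1"
    unfolding coeff_Phi eq using assms by simp
  have "coeff (Phi p M) n = 0" if "n > (p - 1) * M" for n
  proof -
    have "t * M \<noteq> n" if "t < p" for t
    proof -
      have "t * M \<le> (p - 1) * M" using that by (intro mult_right_mono) auto
      then show ?thesis using \<open>n > (p - 1) * M\<close> by auto
    qed
    then show ?thesis unfolding coeff_Phi by (intro sum.neutral) auto
  qed
  then have "degree (Phi p M) \<le> (p - 1) * M" by (intro degree_le) auto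
  moreover have "(p - 1) * M \<le> degree (Phi p M)" using c by (intro le_degree) auto
  ultimately show "degree (Phi p M) = (p - 1) * M" by simp
qed

lemma poly_Phi_1: "poly (Phi p M) 1 = int p"
  by (simp add: Phi_def poly_sum poly_monom)

lemma Psi_cong:
  assumes "prime p" "K \<ge> 1"
  defines "M \<equiv> p ^ (K - 1)"
  shows "pcg (int p) (pcompose (Phi p M) [:1,1:] * monom 1 M) (monom 1 (p * M))"
proof -
  let ?X = "[:1,1::int:]"
  let ?P = "pcompose (Phi p M) ?X"
  have pM: "p * M = p ^ K" using assms(2) unfolding M_def by (metis Suc_diff_1 less_le_trans zero_less_one power_Suc)
  have e: "?P * (?X ^ M - 1) = ?X ^ (p * M) - 1"
  proof -
    have "pcompose (Phi p M * (monom 1 M - 1)) ?X = pcompose (monom 1 (p * M) - 1) ?X"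
      by (simp add: Phi_telescope)
    then show ?thesis by (simp add: pcompose_mult pcompose_diff pcompose_monom1 pcompose_1)
  qed
  have c1: "pcg (int p) (?X ^ M - 1) (monom 1 M)"
    using pcg_diff[OF fresh_pow[OF assms(1), of "K - 1"] pcg_refl[of _ 1]] unfolding M_def by simp
  have c2: "pcg (int p) (?X ^ (p * M) - 1) (monom 1 (p * M))"
    using pcg_diff[OF fresh_pow[OF assms(1), of K] pcg_refl[of _ 1]] unfolding pM by simp
  have "pcg (int p) (?P * monom 1 M) (?P * (?X ^ M - 1))"
    by (intro pcg_mult pcg_refl pcg_sym[OF c1])
  then show ?thesis using e c2 by (metis pcg_trans)
qed

lemma eisenstein:
  fixes F G H :: "int poly" and p :: int
  assumes pr: "prime p" and FGH: "F = G * H" and lc: "lead_coeff F = 1"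
    and dv: "\<forall>i<degree F. p dvd coeff F i" and nd: "\<not> p^2 dvd coeff F 0"
  shows "degree G = 0 \<or> degree H = 0"
proof (rule ccontr)
  assume nz: "\<not> (degree G = 0 \<or> degree H = 0)"
  have F0: "F \<noteq> 0" using lc by auto
  then have G0: "G \<noteq> 0" and H0: "H \<noteq> 0" using FGH by auto
  have "lead_coeff G * lead_coeff H = 1" using lc FGH by (simp add: lead_coeff_mult)
  then have uG: "lead_coeff G dvd 1" and uH: "lead_coeff H dvd 1"
    by (metis dvd_triv_left, metis dvd_triv_right)
  have np: "\<not> p dvd 1" using pr by (metis not_prime_unit)
  have nG: "\<not> p dvd lead_coeff G" using uG np dvd_trans by blast
  have nH: "\<not> p dvd lead_coeff H" using uH np dvd_trans by blast
  define i where "i = (LEAST i. \<not> p dvd coeff G i)"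
  define j where "j = (LEAST i. \<not> p dvd coeff H i)"
  have i1: "\<not> p dvd coeff G i" unfolding i_def by (rule LeastI[of _ "degree G"]) (use nG in auto)
  have i2: "p dvd coeff G k" if "k < i" for k using not_less_Least[of k] that unfolding i_def by blast
  have i3: "i \<le> degree G" unfolding i_def by (rule Least_le) (use nG in auto)
  have j1: "\<not> p dvd coeff H j" unfolding j_def by (rule LeastI[of _ "degree H"]) (use nH in auto)
  have j2: "p dvd coeff H k" if "k < j" for k using not_less_Least[of k] that unfolding j_def by blast
  have j3: "j \<le> degree H" unfolding j_def by (rule Least_le) (use nH in auto)
  have sum: "coeff F (i + j) = coeff G i * coeff H j + (\<Sum>k\<in>{..i+j}-{i}. coeff G k * coeff H (i + j - k))"
    unfolding FGH coeff_mult by (subst sum.remove[of _ i]) auto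
  have rest: "p dvd (\<Sum>k\<in>{..i+j}-{i}. coeff G k * coeff H (i + j - k))"
  proof (intro dvd_sum)
    fix k assume k: "k \<in> {..i+j}-{i}"
    show "p dvd coeff G k * coeff H (i + j - k)"
    proof (cases "k < i")
      case True then show ?thesis using i2 by (simp add: dvd_mult2)
    next
      case False then have "i + j - k < j" using k by auto
      then show ?thesis using j2 by (simp add: dvd_mult)
    qed
  qed
  have "\<not> p dvd coeff G i * coeff H j" using i1 j1 pr by (simp add: prime_dvd_mult_iff)
  then have "\<not> p dvd coeff F (i + j)"
  proof (rule contrapos_nn)
    assume "p dvd coeff F (i + j)"
    then have "p dvd coeff F (i + j) - (\<Sum>k\<in>{..i+j}-{i}. coeff G k * coeff H (i + j - k))"
      using rest by (rule dvd_diff)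
    then show "p dvd coeff G i * coeff H j" using sum by simp
  qed
  then have "i + j \<ge> degree F" using dv by (meson not_le)
  moreover have "degree F = degree G + degree H" using FGH G0 H0 by (simp add: degree_mult_eq)
  ultimately have "i = degree G" "j = degree H" using i3 j3 by auto
  then have "p dvd coeff G 0" "p dvd coeff H 0" using nz i2 j2 by auto
  then have "p^2 dvd coeff G 0 * coeff H 0" by (simp add: power2_eq_square mult_dvd_mono)
  moreover have "coeff F 0 = coeff G 0 * coeff H 0" using FGH by (simp add: coeff_mult)
  ultimately show False using nd by simp
qed

lemma Phi_irreducible:
  assumes "prime p" "K \<ge> 1"
  defines "M \<equiv> p ^ (K - 1)"
  shows "irreducible (Phi p M)"
proof -
  let ?X = "[:1,1::int:]"
  let ?P = "pcompose (Phi p M) ?X"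
  have p2: "p \<ge> 2" using assms(1) by (simp add: prime_ge_2_nat)
  have M1: "M \<ge> 1" unfolding M_def using p2 by simp
  note top = Phi_top[of p M]
  have dPhi: "degree (Phi p M) = (p - 1) * M" using top p2 M1 by auto
  have lPhi: "lead_coeff (Phi p M) = 1" using top p2 M1 by auto
  have dP: "degree ?P = (p - 1) * M" by (simp add: degree_pcompose dPhi)
  have lP: "lead_coeff ?P = 1" by (simp add: lead_coeff_comp lPhi)
  have c0: "coeff ?P 0 = int p" by (simp add: poly_0_coeff_0[symmetric] poly_pcompose poly_Phi_1)
  have dv: "int p dvd coeff ?P i" if "i < (p - 1) * M" for i
  proof -
    have "int p dvd coeff (?P * monom 1 M - monom 1 (p * M)) (i + M)"
      using Psi_cong[OF assms(1,2)] unfolding pcg_def M_def by blast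
    moreover have "i + M \<noteq> p * M"
    proof -
      have "(p - 1) * M + M = p * M" using p2 by (cases p) auto
      then show ?thesis using that by linarith
    qed
    ultimately show ?thesis by (simp add: mult.commute[of ?P] coeff_monom_mult coeff_monom)
  qed
  have nd: "\<not> (int p)^2 dvd coeff ?P 0"
  proof
    assume "(int p)^2 dvd coeff ?P 0"
    then have "(int p)^2 \<le> int p" using c0 p2 by (intro zdvd_imp_le) auto
    then show False using p2 by (simp add: power2_eq_square)
  qed
  have pr: "prime (int p)" using assms(1) by simp
  show ?thesis
  proof (rule irreducibleI)
    show "Phi p M \<noteq> 0" using lPhi by auto
    show "\<not> Phi p M dvd 1"
    proof
      assume "Phi p M dvd 1"
      then obtain c where "Phi p M = [:c:]" by (auto simp: is_unit_poly_iff)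
      then have "degree (Phi p M) = 0" by simp
      then show False using dPhi p2 M1 by simp
    qed
    fix a b assume ab: "Phi p M = a * b"
    then have "?P = pcompose a ?X * pcompose b ?X" by (simp add: pcompose_mult)
    from eisenstein[OF pr this] lP dP dv nd
    have "degree a = 0 \<or> degree b = 0" by (auto simp: degree_pcompose)
    then show "a dvd 1 \<or> b dvd 1"
    proof
      assume "degree a = 0"
      then obtain c where c: "a = [:c:]" by (auto elim: degree_eq_zeroE)
      have "lead_coeff a * lead_coeff b = 1" using lPhi ab by (metis lead_coeff_mult)
      then have "c * lead_coeff b = 1" using c by simp
      then have "c dvd 1" by (metis dvd_triv_left)
      then show ?thesis using c by (auto simp: is_unit_poly_iff)
    next
      assume "degree b = 0"
      then obtain c where c: "b = [:c:]" by (auto elim: degree_eq_zeroE)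
      have "lead_coeff a * lead_coeff b = 1" using lPhi ab by (metis lead_coeff_mult)
      then have "lead_coeff a * c = 1" using c by simp
      then have "c dvd 1" by (metis dvd_triv_right)
      then show ?thesis using c by (auto simp: is_unit_poly_iff)
    qed
  qed
qed

lemma map_poly_of_int_mult:
  "map_poly (of_int :: int \<Rightarrow> 'a::comm_ring_1) (F * G) = map_poly of_int F * map_poly of_int G"
  by (rule poly_eqI) (simp add: coeff_map_poly coeff_mult of_int_sum)

lemma map_poly_of_int_add:
  "map_poly (of_int :: int \<Rightarrow> 'a::comm_ring_1) (F + G) = map_poly of_int F + map_poly of_int G"
  by (rule poly_eqI) (simp add: coeff_map_poly)

lemma map_poly_of_int_smult:
  "map_poly (of_int :: int \<Rightarrow> 'a::comm_ring_1) (smult a F) = smult (of_int a) (map_poly of_int F)"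
  by (rule poly_eqI) (simp add: coeff_map_poly)

lemma min_deg:
  fixes z :: "'a::field_char_0"
  assumes pe: "prime_elem Ph" and z: "poly (map_poly of_int Ph) z = 0"
    and F: "F \<noteq> 0" "poly (map_poly of_int F) z = 0"
  shows "degree Ph \<le> degree F"
proof (rule ccontr)
  assume less: "\<not> degree Ph \<le> degree F"
  let ?ev = "\<lambda>G. poly (map_poly (of_int :: int \<Rightarrow> 'a) G) z"
  define n0 where "n0 = (LEAST n. \<exists>G. G \<noteq> 0 \<and> ?ev G = 0 \<and> degree G = n)"
  have ex: "\<exists>G. G \<noteq> 0 \<and> ?ev G = 0 \<and> degree G = degree F" using F by blast
  then have ex': "\<exists>n. \<exists>G. G \<noteq> 0 \<and> ?ev G = 0 \<and> degree G = n" by blast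
  obtain G where G: "G \<noteq> 0" "?ev G = 0" "degree G = n0"
    using LeastI_ex[OF ex'] unfolding n0_def by blast
  have n0F: "n0 \<le> degree F" unfolding n0_def by (rule Least_le) (use ex in blast)
  have Ph0: "Ph \<noteq> 0" using pe by auto
  define R where "R = pseudo_mod Ph G"
  obtain a Q where aQ: "a \<noteq> 0" "smult a Ph = G * Q + R" using pseudo_mod(1)[OF G(1)] unfolding R_def by blast
  have Rd: "R = 0 \<or> degree R < degree G" using pseudo_mod(2)[OF G(1)] unfolding R_def by blast
  have "?ev (smult a Ph) = ?ev (G * Q + R)" using aQ by simp
  then have evR: "?ev R = 0" using z G(2) by (simp add: map_poly_of_int_smult map_poly_of_int_add map_poly_of_int_mult)
  have R0: "R = 0"
  proof (rule ccontr)
    assume "R \<noteq> 0"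
    then have "degree R < n0" using Rd G(3) by auto
    moreover have "n0 \<le> degree R" unfolding n0_def by (rule Least_le) (use evR \<open>R \<noteq> 0\<close> in blast)
    ultimately show False by simp
  qed
  have "Ph dvd G * Q" using aQ R0 by (metis add.right_neutral dvd_refl dvd_smult)
  then have "Ph dvd G \<or> Ph dvd Q" using pe by (simp add: prime_elem_dvd_mult_iff)
  then show False
  proof
    assume "Ph dvd G"
    then have "degree Ph \<le> degree G" using G(1) by (rule dvd_imp_degree_le)
    then show False using less n0F G(3) by simp
  next
    assume "Ph dvd Q"
    then obtain Q2 where Q2: "Q = Ph * Q2" by (auto elim: dvdE)
    have eq: "smult a Ph = G * Ph * Q2" using aQ R0 Q2 by (simp add: mult.assoc)
    then have "Q2 \<noteq> 0" using aQ(1) Ph0 by auto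
    then have "degree Ph = degree G + degree Ph + degree Q2"
      using arg_cong[OF eq, of degree] aQ(1) Ph0 G(1) by (simp add: degree_mult_eq)
    then have "degree G = 0" by simp
    then obtain g where g: "G = [:g:]" by (auto elim: degree_eq_zeroE)
    then have "g \<noteq> 0" using G(1) by simp
    moreover have "?ev G = of_int g" using g by (simp add: map_poly_pCons)
    ultimately show False using G(2) by simp
  qed
qed

lemma sum_single: "finite A \<Longrightarrow> s \<in> A \<Longrightarrow> (\<And>t. t \<in> A \<Longrightarrow> t \<noteq> s \<Longrightarrow> f t = (0::'b::comm_monoid_add)) \<Longrightarrow> sum f A = f s"
  by (simp add: sum.remove sum.neutral)

lemma periodic:
  fixes z :: "'a::field_char_0"
  assumes pe: "prime_elem (Phi p M)" and z: "poly (map_poly of_int (Phi p M)) z = 0"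
    and p1: "p \<ge> 1" and M1: "M \<ge> 1"
    and P: "poly (map_poly of_int P) z = 0" "degree P < p * M"
    and j: "j1 < p * M" "j2 < p * M" "j1 mod M = j2 mod M"
  shows "coeff P j1 = coeff P j2"
proof -
  let ?ev = "\<lambda>G. poly (map_poly (of_int :: int \<Rightarrow> 'a) G) z"
  note top = Phi_top[OF p1 M1]
  obtain Q R where QR: "pseudo_divmod P (Phi p M) = (Q, R)" by (cases "pseudo_divmod P (Phi p M)") auto
  have Phi0: "Phi p M \<noteq> 0" using top by auto
  have lc: "coeff (Phi p M) (degree (Phi p M)) = 1" using top by simp
  have e1: "P = Phi p M * Q + R" using pseudo_divmod(1)[OF Phi0 QR] lc by simp
  have e2: "R = 0 \<or> degree R < degree (Phi p M)" using pseudo_divmod(2)[OF Phi0 QR] .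
  have "?ev R = 0" using arg_cong[OF e1, of ?ev] P(1) z by (simp add: map_poly_of_int_add map_poly_of_int_mult)
  then have R0: "R = 0" using e2 min_deg[OF pe z, of R] by (meson not_le)
  have PQ: "P = Phi p M * Q" using e1 R0 by simp
  have cQ: "coeff Q k = 0" if "k \<ge> M" for k
  proof (cases "Q = 0")
    case False
    then have "degree P = (p - 1) * M + degree Q" using PQ Phi0 top by (simp add: degree_mult_eq)
    then have "degree Q < M" using P(2) p1 by (simp add: algebra_simps)
    then show ?thesis using that by (simp add: coeff_eq_0)
  qed simp
  have key: "coeff P j = coeff Q (j mod M)" if "j < p * M" for j
  proof -
    define s where "s = j div M"
    have s: "s < p" using that M1 unfolding s_def by (simp add: div_less_iff_less_mult)
    have "coeff P j = (\<Sum>t<p. if j < t * M then 0 else coeff Q (j - t * M))"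
      unfolding PQ Phi_def sum_distrib_right by (auto simp: coeff_sum coeff_monom_mult intro!: sum.cong)
    also have "\<dots> = (if j < s * M then 0 else coeff Q (j - s * M))"
    proof (rule sum_single)
      show "s \<in> {..<p}" using s by simp
      show "finite {..<p}" by simp
      fix t assume t: "t \<in> {..<p}" "t \<noteq> s"
      show "(if j < t * M then 0 else coeff Q (j - t * M)) = 0"
      proof (cases "t < s")
        case True
        have "j - t * M \<ge> M"
        proof -
          have "s * M \<le> j" unfolding s_def by (simp add: div_times_less_eq_dividend)
          moreover have "(t + 1) * M \<le> s * M" using True by (intro mult_right_mono) auto
          ultimately show ?thesis by (simp add: algebra_simps)
        qed
        then show ?thesis using cQ by simp
      next
        case False
        then have "s + 1 \<le> t" using t by simp
        then have "(s + 1) * M \<le> t * M" by (intro mult_right_mono) auto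
        moreover have "j < (s + 1) * M" unfolding s_def using M1
          by (metis add.commute div_mult_mod_eq mod_less_divisor mult_Suc nat_add_left_cancel_less plus_1_eq_Suc zero_less_one less_le_trans)
        ultimately show ?thesis by simp
      qed
    qed
    also have "\<dots> = coeff Q (j mod M)"
    proof -
      have "\<not> j < j div M * M" using div_times_less_eq_dividend[of j M] by linarith
      then show ?thesis unfolding s_def by (simp add: minus_div_mult_eq_mod)
    qed
    finally show ?thesis .
  qed
  show ?thesis using key[OF j(1)] key[OF j(2)] j(3) by simp
qed


abbreviation "pp p \<equiv> (of_nat p :: rat)"

lemma pcong_refl: "pcong p m q q" unfolding pcong_def by (rule exI[of _ 0]) simp

lemma pcong_sym: "pcong p m q r \<Longrightarrow> pcong p m r q"
  unfolding pcong_def by (metis minus_diff_eq mult_minus_left of_int_minus)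

lemma pcong_trans: "pcong p m q r \<Longrightarrow> pcong p m r s \<Longrightarrow> pcong p m q s"
  unfolding pcong_def
proof (elim exE)
  fix k l assume "q - r = of_int k * pp p powi m" "r - s = of_int l * pp p powi m"
  then have "q - s = of_int (k + l) * pp p powi m" by (simp add: algebra_simps)
  then show "\<exists>k. q - s = of_int k * pp p powi m" by blast
qed

lemma pcong_add: "pcong p m a b \<Longrightarrow> pcong p m c d \<Longrightarrow> pcong p m (a + c) (b + d)"
  unfolding pcong_def
proof (elim exE)
  fix k l assume "a - b = of_int k * pp p powi m" "c - d = of_int l * pp p powi m"
  then have "(a + c) - (b + d) = of_int (k + l) * pp p powi m" by (simp add: algebra_simps)
  then show "\<exists>k. (a + c) - (b + d) = of_int k * pp p powi m" by blast
qed

lemma pcong_diff: "pcong p m a b \<Longrightarrow> pcong p m c d \<Longrightarrow> pcong p m (a - c) (b - d)"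
  unfolding pcong_def
proof (elim exE)
  fix k l assume "a - b = of_int k * pp p powi m" "c - d = of_int l * pp p powi m"
  then have "(a - c) - (b - d) = of_int (k - l) * pp p powi m" by (simp add: algebra_simps)
  then show "\<exists>k. (a - c) - (b - d) = of_int k * pp p powi m" by blast
qed

lemma pcong_0_iff: "pcong p m q r \<longleftrightarrow> pcong p m (q - r) 0"
  unfolding pcong_def by simp

lemma pcong_mono:
  assumes "p > 0" "m' \<le> m" "pcong p m q r" shows "pcong p m' q r"
proof -
  obtain k where k: "q - r = of_int k * pp p powi m" using assms(3) unfolding pcong_def by blast
  obtain d where d: "m = m' + int d" using assms(2) by (metis le_iff_add zle_iff_zadd)
  have "pp p powi m = pp p powi m' * pp p ^ d" using assms(1) unfolding d
    by (simp add: power_int_add power_int_of_nat)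
  then have "q - r = of_int (k * int p ^ d) * pp p powi m'" using k by simp
  then show ?thesis unfolding pcong_def by blast
qed

lemma pcong_mult0:
  assumes "p > 0" "pcong p e1 a 0" "pcong p e2 b 0" shows "pcong p (e1 + e2) (a * b) 0"
proof -
  obtain k l where "a = of_int k * pp p powi e1" "b = of_int l * pp p powi e2"
    using assms(2,3) unfolding pcong_def by auto
  then have "a * b - 0 = of_int (k * l) * pp p powi (e1 + e2)" using assms(1) by (simp add: power_int_add)
  then show ?thesis unfolding pcong_def by blast
qed

lemma pcong_sum0:
  assumes "finite A" "\<And>x. x \<in> A \<Longrightarrow> pcong p e (f x) 0" shows "pcong p e (sum f A) 0"
  using assms
proof (induction A rule: finite_induct)
  case empty then show ?case by (simp add: pcong_refl)
next
  case (insert x A) then show ?case using pcong_add[of p e "f x" 0 "sum f A" 0] by simp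
qed

lemma pcong_term: "p > 0 \<Longrightarrow> N \<le> n \<Longrightarrow> pcong p N (of_int c * pp p powi n) 0"
  by (rule pcong_mono[of p N n]) (auto simp: pcong_def)

lemma pcong_digit:
  assumes "p > 0" "pcong p (n + 1) (of_int x * pp p powi n) 0" shows "int p dvd x"
proof -
  obtain k where "of_int x * pp p powi n = of_int k * pp p powi (n + 1)"
    using assms(2) unfolding pcong_def by auto
  then have "of_int x * pp p powi n = (of_int (k * int p) :: rat) * pp p powi n"
    using assms(1) by (simp add: power_int_add)
  then have "(of_int x :: rat) = of_int (k * int p)" using assms(1) by simp
  then have "x = k * int p" by (simp only: of_int_eq_iff)
  then show ?thesis by simp
qed

lemma int_least:
  fixes P :: "int \<Rightarrow> bool"
  assumes "P n" "\<And>n. n < N \<Longrightarrow> \<not> P n"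
  shows "\<exists>n0. P n0 \<and> (\<forall>n<n0. \<not> P n)"
proof -
  have nN: "N \<le> n" using assms by force
  define k where "k = (LEAST k::nat. P (N + int k))"
  have "P (N + int (nat (n - N)))" using assms nN by simp
  then have Pk: "P (N + int k)" unfolding k_def by (rule LeastI)
  have "\<not> P m" if "m < N + int k" for m
  proof (cases "m < N")
    case True then show ?thesis using assms by auto
  next
    case False
    then have "nat (m - N) < k" using that by auto
    then have "\<not> P (N + int (nat (m - N)))" unfolding k_def by (rule not_less_Least)
    then show ?thesis using False by simp
  qed
  then show ?thesis using Pk by blast
qed

lemma padic_lb: "padic p a \<Longrightarrow> \<exists>N. \<forall>n<N. a n = 0" unfolding padic_def by blast

lemma ptrunc_cong_digits: "(\<And>n. n < m \<Longrightarrow> a n = b n) \<Longrightarrow> ptrunc p a m = ptrunc p b m"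
  unfolding ptrunc_def by (rule sum.cong) auto

lemma ptrunc_zero: "(\<And>n. n < m \<Longrightarrow> a n = 0) \<Longrightarrow> ptrunc p a m = 0"
  unfolding ptrunc_def by (rule sum.neutral) auto

lemma ptrunc_eq:
  assumes "\<And>n. n < N \<Longrightarrow> a n = 0"
  shows "ptrunc p a m = (\<Sum>n\<in>{N..<m}. of_int (a n) * pp p powi n)"
  unfolding ptrunc_def
proof (rule sum.mono_neutral_left)
  show "finite {N..<m}" by simp
  show "{n. n < m \<and> a n \<noteq> 0} \<subseteq> {N..<m}" using assms by (auto simp: not_less[symmetric])
  show "\<forall>i\<in>{N..<m} - {n. n < m \<and> a n \<noteq> 0}. of_int (a i) * pp p powi i = 0" by auto
qed

lemma ptrunc_Suc:
  assumes "padic p a" shows "ptrunc p a (m + 1) = ptrunc p a m + of_int (a m) * pp p powi m"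
proof -
  obtain N where N: "\<forall>n<N. a n = 0" using padic_lb[OF assms] by blast
  define N' where "N' = min N m"
  have N': "\<And>n. n < N' \<Longrightarrow> a n = 0" using N unfolding N'_def by auto
  have "{N'..<m + 1} = insert m {N'..<m}" unfolding N'_def by auto
  then show ?thesis by (simp add: ptrunc_eq[OF N'] add.commute)
qed

lemma ptrunc_lb:
  assumes "p > 0" "\<And>n. n < N \<Longrightarrow> a n = 0" shows "pcong p N (ptrunc p a m) 0"
proof -
  have e: "ptrunc p a m = (\<Sum>n\<in>{N..<m}. of_int (a n) * pp p powi n)" by (rule ptrunc_eq[OF assms(2)])
  show ?thesis unfolding e by (rule pcong_sum0) (auto intro: pcong_term[OF assms(1)])
qed

lemma ptrunc_mono:
  assumes "p > 0" "padic p a" "m \<le> m2" shows "pcong p m (ptrunc p a m2) (ptrunc p a m)"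
proof -
  obtain N where N: "\<forall>n<N. a n = 0" using padic_lb[OF assms(2)] by blast
  define N' where "N' = min N m"
  have N': "\<And>n. n < N' \<Longrightarrow> a n = 0" using N unfolding N'_def by auto
  have u: "{N'..<m2} = {N'..<m} \<union> {m..<m2}" and d: "{N'..<m} \<inter> {m..<m2} = {}" using assms(3) unfolding N'_def by auto
  have "ptrunc p a m2 = (\<Sum>n\<in>{N'..<m} \<union> {m..<m2}. of_int (a n) * pp p powi n)"
    unfolding u[symmetric] by (rule ptrunc_eq[OF N'])
  also have "\<dots> = ptrunc p a m + (\<Sum>n\<in>{m..<m2}. of_int (a n) * pp p powi n)"
  proof -
    have "(\<Sum>n\<in>{N'..<m} \<union> {m..<m2}. of_int (a n) * pp p powi n) =
      (\<Sum>n\<in>{N'..<m}. of_int (a n) * pp p powi n) + (\<Sum>n\<in>{m..<m2}. of_int (a n) * pp p powi n)"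
      by (rule sum.union_disjoint) (simp_all only: finite_atLeastLessThan_int d)
    also have "(\<Sum>n\<in>{N'..<m}. of_int (a n) * pp p powi n) = ptrunc p a m"
      by (rule ptrunc_eq[where p=p and m=m, OF N', symmetric])
    finally show ?thesis .
  qed
  finally have "ptrunc p a m2 - ptrunc p a m = (\<Sum>n\<in>{m..<m2}. of_int (a n) * pp p powi n)"
    by simp
  moreover have "pcong p m (\<Sum>n\<in>{m..<m2}. of_int (a n) * pp p powi n) 0"
    by (rule pcong_sum0) (auto intro: pcong_term[OF assms(1)])
  ultimately show ?thesis by (subst pcong_0_iff) simp
qed


lemma ptrunc_zero_below:
  assumes "p > 1" "padic p c" "pcong p L (ptrunc p c L) 0"
  shows "\<forall>n<L. c n = 0"
proof (rule ccontr)
  assume "\<not> (\<forall>n<L. c n = 0)"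
  then obtain n1 where n1: "n1 < L" "c n1 \<noteq> 0" by auto
  obtain N where N: "\<forall>n<N. c n = 0" using padic_lb[OF assms(2)] by blast
  obtain n0 where n0: "c n0 \<noteq> 0" "\<forall>n<n0. c n = 0"
    using int_least[of "\<lambda>n. c n \<noteq> 0" n1 N] n1 N by blast
  have n0L: "n0 < L" using n0 n1 by force
  have p0: "p > 0" using assms by simp
  have z: "ptrunc p c n0 = 0" by (rule ptrunc_zero) (use n0 in auto)
  have e1: "ptrunc p c (n0 + 1) = of_int (c n0) * pp p powi n0"
    using ptrunc_Suc[OF assms(2), of n0] z by simp
  have c1: "pcong p (n0 + 1) (ptrunc p c L) (ptrunc p c (n0 + 1))"
    by (rule ptrunc_mono[OF p0 assms(2)]) (use n0L in simp)
  have c2: "pcong p (n0 + 1) (ptrunc p c L) 0"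
    by (rule pcong_mono[OF p0 _ assms(3)]) (use n0L in simp)
  have "pcong p (n0 + 1) (of_int (c n0) * pp p powi n0) 0"
    using pcong_trans[OF pcong_sym[OF c1] c2] e1 by simp
  then have "int p dvd c n0" by (rule pcong_digit[OF p0])
  moreover have "0 < c n0" "c n0 < int p" using assms(2) n0(1) unfolding padic_def
    by (metis order_le_less)+
  ultimately show False using zdvd_imp_le by fastforce
qed

lemma padic_unique:
  assumes "p > 1" "padic p c" "padic p c'" "\<And>m. pcong p m (ptrunc p c m) (ptrunc p c' m)"
  shows "c = c'"
proof (rule ccontr)
  assume "c \<noteq> c'"
  then obtain n1 where n1: "c n1 \<noteq> c' n1" by auto
  obtain N where N: "\<forall>n<N. c n = 0" using padic_lb[OF assms(2)] by blast
  obtain N' where N': "\<forall>n<N'. c' n = 0" using padic_lb[OF assms(3)] by blast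
  obtain n0 where n0: "c n0 \<noteq> c' n0" "\<forall>n<n0. c n = c' n"
    using int_least[of "\<lambda>n. c n \<noteq> c' n" n1 "min N N'"] n1 N N' by force
  have p0: "p > 0" using assms by simp
  have e: "ptrunc p c n0 = ptrunc p c' n0" by (rule ptrunc_cong_digits) (use n0 in auto)
  have "pcong p (n0 + 1) (ptrunc p c (n0 + 1) - ptrunc p c' (n0 + 1)) 0"
    using assms(4)[of "n0 + 1"] by (subst (asm) pcong_0_iff)
  then have "pcong p (n0 + 1) (of_int (c n0 - c' n0) * pp p powi n0) 0"
    using ptrunc_Suc[OF assms(2), of n0] ptrunc_Suc[OF assms(3), of n0] e by (simp add: algebra_simps)
  then have d: "int p dvd c n0 - c' n0" by (rule pcong_digit[OF p0])
  have "\<bar>c n0 - c' n0\<bar> < int p" using assms(2,3) unfolding padic_def by (metis abs_diff_less_iff add.commute add_0 add_less_le_mono diff_less_eq)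
  then have "c n0 - c' n0 = 0"
  proof (rule contrapos_pp)
    assume "c n0 - c' n0 \<noteq> 0"
    then have "\<bar>int p\<bar> \<le> \<bar>c n0 - c' n0\<bar>" using d by (rule dvd_imp_le_int)
    then show "\<not> \<bar>c n0 - c' n0\<bar> < int p" by simp
  qed
  then show False using n0 by simp
qed

definition dig :: "nat \<Rightarrow> rat \<Rightarrow> int \<Rightarrow> int" where
  "dig p q n = \<lfloor>q / pp p powi n\<rfloor> mod int p"

lemma dig_range: "p > 0 \<Longrightarrow> 0 \<le> dig p q n \<and> dig p q n < int p"
  unfolding dig_def by simp

lemma dig_low:
  assumes "p > 0" "pcong p N q 0" "n < N" shows "dig p q n = 0"
proof -
  obtain k where k: "q = of_int k * pp p powi N" using assms(2) unfolding pcong_def by auto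
  define d where "d = nat (N - n)"
  have d1: "d \<ge> 1" and Nd: "N = n + int d" using assms(3) unfolding d_def by auto
  have h: "q / pp p powi n = of_int (k * int p ^ d)"
    using assms(1) unfolding k Nd by (simp add: power_int_add power_int_of_nat)
  have "\<lfloor>q / pp p powi n\<rfloor> = k * int p ^ d" by (simp only: h floor_of_int)
  moreover have "int p dvd k * int p ^ d" using d1 by (simp add: dvd_power)
  ultimately show ?thesis unfolding dig_def by simp
qed

lemma padic_dig: "p > 0 \<Longrightarrow> pcong p N q 0 \<Longrightarrow> padic p (dig p q)"
  unfolding padic_def using dig_range dig_low by blast

lemma dig_cong:
  assumes "p > 0" "pcong p (n + 1) q q'" shows "dig p q n = dig p q' n"
proof -
  obtain k where k: "q - q' = of_int k * pp p powi (n + 1)" using assms(2) unfolding pcong_def by auto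
  have h: "q / pp p powi n = q' / pp p powi n + of_int (k * int p)"
  proof -
    have "q = q' + of_int k * pp p powi (n + 1)" using k by (simp add: algebra_simps)
    then show ?thesis using assms(1) by (simp add: power_int_add field_simps)
  qed
  have "\<lfloor>q / pp p powi n\<rfloor> = \<lfloor>q' / pp p powi n\<rfloor> + k * int p"
    by (simp only: h floor_add_int)
  then show ?thesis unfolding dig_def by simp
qed

lemma floor_div_p:
  assumes "p > 0" shows "\<lfloor>x / pp p\<rfloor> = \<lfloor>x\<rfloor> div int p"
proof -
  define f where "f = \<lfloor>x\<rfloor>"
  define d where "d = f div int p"
  have f1: "of_int f \<le> x" "x < of_int f + 1" unfolding f_def by linarith+
  have m: "f = d * int p + f mod int p" by (simp add: d_def)
  have "0 \<le> f mod int p" "f mod int p < int p" using assms by simp_all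
  then have d1: "d * int p \<le> f" "f + 1 \<le> (d + 1) * int p" using m by (simp_all add: algebra_simps)
  have r1: "of_int d * pp p \<le> x"
  proof -
    have "(of_int (d * int p) :: rat) \<le> of_int f" using d1(1) by (simp only: of_int_le_iff)
    then show ?thesis using f1 by simp
  qed
  have r2: "x < (of_int d + 1) * pp p"
  proof -
    have "(of_int (f + 1) :: rat) \<le> of_int ((d + 1) * int p)" using d1(2) by (simp only: of_int_le_iff)
    then show ?thesis using f1 by simp
  qed
  have pp0: "pp p > 0" using assms by simp
  have "of_int d \<le> x / pp p" using r1 pp0 by (simp add: le_divide_eq)
  moreover have "x / pp p < of_int d + 1" using r2 pp0 by (simp add: divide_less_eq)
  ultimately show ?thesis unfolding d_def f_def by (rule floor_unique)
qed

lemma dig_trunc: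
  assumes "p > 0" "pcong p N q 0" "N \<le> m"
  shows "ptrunc p (dig p q) m = q - of_int \<lfloor>q / pp p powi m\<rfloor> * pp p powi m"
proof -
  obtain d where d: "m = N + int d" using assms(3) by (metis le_iff_add zle_iff_zadd)
  have pd: "padic p (dig p q)" using padic_dig[OF assms(1,2)] .
  have "ptrunc p (dig p q) (N + int d) = q - of_int \<lfloor>q / pp p powi (N + int d)\<rfloor> * pp p powi (N + int d)"
  proof (induction d)
    case 0
    obtain k where k: "q = of_int k * pp p powi N" using assms(2) unfolding pcong_def by auto
    have "ptrunc p (dig p q) N = 0" by (rule ptrunc_zero) (use dig_low[OF assms(1,2)] in auto)
    moreover have "q / pp p powi N = of_int k" using assms(1) k by simp
    ultimately show ?case using k by simp
  next
    case (Suc d)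
    define m' where "m' = N + int d"
    define F where "F = \<lfloor>q / pp p powi m'\<rfloor>"
    have e: "N + int (Suc d) = m' + 1" unfolding m'_def by simp
    have F1: "\<lfloor>q / pp p powi (m' + 1)\<rfloor> = F div int p"
    proof -
      have h: "q / pp p powi (m' + 1) = (q / pp p powi m') / pp p" using assms(1) by (simp add: power_int_add)
      show ?thesis unfolding F_def by (simp only: h floor_div_p[OF assms(1)])
    qed
    have "ptrunc p (dig p q) (m' + 1) = ptrunc p (dig p q) m' + of_int (dig p q m') * pp p powi m'"
      by (rule ptrunc_Suc[OF pd])
    also have "\<dots> = q - of_int F * pp p powi m' + of_int (F mod int p) * pp p powi m'"
      using Suc unfolding m'_def F_def dig_def by simp
    also have "\<dots> = q - of_int (F div int p * int p) * pp p powi m'"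
    proof -
      have h: "(of_int F :: rat) = of_int (F div int p) * pp p + of_int (F mod int p)"
        by (metis div_mult_mod_eq of_int_add of_int_mult of_int_of_nat_eq)
      show ?thesis by (subst h) (simp add: algebra_simps)
    qed
    also have "\<dots> = q - of_int \<lfloor>q / pp p powi (m' + 1)\<rfloor> * pp p powi (m' + 1)"
      using assms(1) unfolding F1 by (simp add: power_int_add)
    finally show ?case unfolding e .
  qed
  then show ?thesis unfolding d .
qed

lemma pcong_trunc_dig:
  assumes "p > 0" "pcong p N q 0" shows "pcong p m (ptrunc p (dig p q) m) q"
proof (cases "N \<le> m")
  case True
  show ?thesis unfolding dig_trunc[OF assms True] pcong_def
    by (rule exI[of _ "- \<lfloor>q / pp p powi m\<rfloor>"]) simp
next
  case False
  have "ptrunc p (dig p q) m = 0" by (rule ptrunc_zero) (use dig_low[OF assms] False in auto)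
  moreover have "pcong p m q 0" by (rule pcong_mono[OF assms(1) _ assms(2)]) (use False in simp)
  ultimately show ?thesis by (simp add: pcong_sym)
qed


lemma plim_exists:
  fixes s :: "int \<Rightarrow> rat"
  assumes p1: "p > 1" and lb: "\<And>m'. pcong p N (s m') 0"
    and cau: "\<And>m. \<exists>M. \<forall>m'\<ge>M. pcong p m (s m') (s M)"
  shows "\<exists>c. padic p c \<and> (\<forall>m. \<exists>M. \<forall>m'\<ge>M. pcong p m (ptrunc p c m) (s m'))"
proof -
  have p0: "p > 0" using p1 by simp
  obtain Mf where Mf: "\<And>m m'. m' \<ge> Mf m \<Longrightarrow> pcong p m (s m') (s (Mf m))"
    using cau by metis
  define c where "c n = dig p (s (Mf (n + 1))) n" for n
  have pc: "padic p c" unfolding padic_def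
  proof
    show "\<forall>n. 0 \<le> c n \<and> c n < int p" unfolding c_def using dig_range[OF p0] by blast
    show "\<exists>N. \<forall>n<N. c n = 0" unfolding c_def using dig_low[OF p0 lb] by blast
  qed
  have "\<exists>M. \<forall>m'\<ge>M. pcong p m (ptrunc p c m) (s m')" for m
  proof -
    define M where "M = Max (insert 0 ((\<lambda>n. Mf (n + 1)) ` {N..<m}))"
    have MM: "Mf (n + 1) \<le> M" if "n \<in> {N..<m}" for n
      unfolding M_def using that by (intro Max_ge) auto
    have "pcong p m (ptrunc p c m) (s m')" if m': "m' \<ge> M" for m'
    proof -
      have "c n = dig p (s m') n" if n: "n < m" for n
      proof (cases "n < N")
        case True
        then show ?thesis unfolding c_def using dig_low[OF p0 lb] by simp
      next
        case False
        then have "Mf (n + 1) \<le> m'" using MM[of n] n m' by auto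
        then have "pcong p (n + 1) (s m') (s (Mf (n + 1)))" by (rule Mf)
        then show ?thesis unfolding c_def by (simp add: dig_cong[OF p0] pcong_sym)
      qed
      then have "ptrunc p c m = ptrunc p (dig p (s m')) m" by (rule ptrunc_cong_digits)
      then show ?thesis using pcong_trunc_dig[OF p0 lb] by simp
    qed
    then show ?thesis by blast
  qed
  then show ?thesis using pc by blast
qed

lemma plim_spec:
  fixes s :: "int \<Rightarrow> rat"
  assumes p1: "p > 1"
    and ex: "\<exists>c. padic p c \<and> (\<forall>m. \<exists>M. \<forall>m'\<ge>M. pcong p m (ptrunc p c m) (s m'))"
  shows "padic p (plim p s) \<and> (\<forall>m. \<exists>M. \<forall>m'\<ge>M. pcong p m (ptrunc p (plim p s) m) (s m'))"
proof -
  have ex1: "\<exists>!c. padic p c \<and> (\<forall>m. \<exists>M. \<forall>m'\<ge>M. pcong p m (ptrunc p c m) (s m'))"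
  proof (rule ex_ex1I)
    show "\<exists>c. padic p c \<and> (\<forall>m. \<exists>M. \<forall>m'\<ge>M. pcong p m (ptrunc p c m) (s m'))" by (rule ex)
    fix c c' assume c: "padic p c \<and> (\<forall>m. \<exists>M. \<forall>m'\<ge>M. pcong p m (ptrunc p c m) (s m'))"
      and c': "padic p c' \<and> (\<forall>m. \<exists>M. \<forall>m'\<ge>M. pcong p m (ptrunc p c' m) (s m'))"
    show "c = c'"
    proof (rule padic_unique[OF p1])
      show "padic p c" "padic p c'" using c c' by auto
      fix m
      obtain M1 where M1: "\<forall>m'\<ge>M1. pcong p m (ptrunc p c m) (s m')" using c by blast
      obtain M2 where M2: "\<forall>m'\<ge>M2. pcong p m (ptrunc p c' m) (s m')" using c' by blast
      have "pcong p m (ptrunc p c m) (s (max M1 M2))" "pcong p m (ptrunc p c' m) (s (max M1 M2))"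
        using M1 M2 by auto
      then show "pcong p m (ptrunc p c m) (ptrunc p c' m)" by (metis pcong_sym pcong_trans)
    qed
  qed
  show ?thesis unfolding plim_def by (rule theI'[OF ex1])
qed


lemma psub_spec:
  assumes p1: "p > 1" and a: "padic p a" and b: "padic p b"
  shows "padic p (psub p a b) \<and> (\<forall>m. \<exists>M. \<forall>m'\<ge>M. pcong p m (ptrunc p (psub p a b) m) (ptrunc p a m' - ptrunc p b m'))"
proof -
  have p0: "p > 0" using p1 by simp
  obtain Na where Na: "\<forall>n<Na. a n = 0" using padic_lb[OF a] by blast
  obtain Nb where Nb: "\<forall>n<Nb. b n = 0" using padic_lb[OF b] by blast
  have Na': "\<And>n. n < min Na Nb \<Longrightarrow> a n = 0" and Nb': "\<And>n. n < min Na Nb \<Longrightarrow> b n = 0" using Na Nb by auto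
  have lb: "pcong p (min Na Nb) (ptrunc p a m' - ptrunc p b m') 0" for m'
  proof -
    have 1: "pcong p (min Na Nb) (ptrunc p a m') 0" by (rule ptrunc_lb[OF p0]) (use Na in auto)
    have 2: "pcong p (min Na Nb) (ptrunc p b m') 0" by (rule ptrunc_lb[OF p0]) (use Nb in auto)
    show ?thesis using pcong_diff[OF 1 2] by simp
  qed
  have cau: "\<exists>M. \<forall>m'\<ge>M. pcong p m (ptrunc p a m' - ptrunc p b m') (ptrunc p a M - ptrunc p b M)" for m
  proof -
    have "\<forall>m'\<ge>m. pcong p m (ptrunc p a m' - ptrunc p b m') (ptrunc p a m - ptrunc p b m)"
      using pcong_diff[OF ptrunc_mono[OF p0 a] ptrunc_mono[OF p0 b]] by blast
    then show ?thesis by blast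
  qed
  show ?thesis unfolding psub_def
    by (rule plim_spec[OF p1 plim_exists[OF p1 lb cau]])
qed

lemma pmult_spec:
  assumes p1: "p > 1" and a: "padic p a" and b: "padic p b"
  shows "padic p (pmult p a b) \<and> (\<forall>m. \<exists>M. \<forall>m'\<ge>M. pcong p m (ptrunc p (pmult p a b) m) (ptrunc p a m' * ptrunc p b m'))"
proof -
  have p0: "p > 0" using p1 by simp
  obtain Na where Na: "\<forall>n<Na. a n = 0" using padic_lb[OF a] by blast
  obtain Nb where Nb: "\<forall>n<Nb. b n = 0" using padic_lb[OF b] by blast
  define N0 where "N0 = min (min Na Nb) 0"
  have Na': "\<And>n. n < N0 \<Longrightarrow> a n = 0" and Nb': "\<And>n. n < N0 \<Longrightarrow> b n = 0" using Na Nb unfolding N0_def by auto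
  have Na2: "\<And>n. n < Na \<Longrightarrow> a n = 0" and Nb2: "\<And>n. n < Nb \<Longrightarrow> b n = 0" using Na Nb by auto
  have lb: "pcong p (Na + Nb) (ptrunc p a m' * ptrunc p b m') 0" for m'
  proof -
    have 1: "pcong p Na (ptrunc p a m') 0" by (rule ptrunc_lb[OF p0]) (use Na in auto)
    have 2: "pcong p Nb (ptrunc p b m') 0" by (rule ptrunc_lb[OF p0]) (use Nb in auto)
    show ?thesis using pcong_mult0[OF p0 1 2] by simp
  qed
  have cau: "\<exists>M. \<forall>m'\<ge>M. pcong p m (ptrunc p a m' * ptrunc p b m') (ptrunc p a M * ptrunc p b M)" for m
  proof -
    define M where "M = max m 0 - N0"
    have M0: "M \<ge> 0" "M \<ge> m" "M + N0 \<ge> m" unfolding M_def N0_def by auto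
    have "pcong p m (ptrunc p a m' * ptrunc p b m') (ptrunc p a M * ptrunc p b M)" if m': "m' \<ge> M" for m'
    proof -
      define A where "A = ptrunc p a M"
      define B where "B = ptrunc p b M"
      define x where "x = ptrunc p a m' - A"
      define y where "y = ptrunc p b m' - B"
      have x: "pcong p M x 0" unfolding x_def A_def using ptrunc_mono[OF p0 a m'] by (subst (asm) pcong_0_iff)
      have y: "pcong p M y 0" unfolding y_def B_def using ptrunc_mono[OF p0 b m'] by (subst (asm) pcong_0_iff)
      have A: "pcong p N0 A 0" unfolding A_def by (rule ptrunc_lb[OF p0]) (use Na' in auto)
      have B: "pcong p N0 B 0" unfolding B_def by (rule ptrunc_lb[OF p0]) (use Nb' in auto)
      have t1: "pcong p m (x * B) 0" by (rule pcong_mono[OF p0 _ pcong_mult0[OF p0 x B]]) (use M0 in simp)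
      have t2: "pcong p m (A * y) 0" by (rule pcong_mono[OF p0 _ pcong_mult0[OF p0 A y]]) (use M0 in simp)
      have t3: "pcong p m (x * y) 0" by (rule pcong_mono[OF p0 _ pcong_mult0[OF p0 x y]]) (use M0 in simp)
      have "pcong p m (x * B + A * y + x * y) 0" using pcong_add[OF pcong_add[OF t1 t2] t3] by simp
      moreover have "ptrunc p a m' * ptrunc p b m' - A * B = x * B + A * y + x * y"
        unfolding x_def y_def by (simp add: algebra_simps)
      ultimately show ?thesis unfolding A_def B_def by (subst pcong_0_iff) simp
    qed
    then show ?thesis by blast
  qed
  show ?thesis unfolding pmult_def
    by (rule plim_spec[OF p1 plim_exists[OF p1 lb cau]])
qed

lemma psub_small:
  assumes p1: "p > 1" and a: "padic p a" and b: "padic p b"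
    and c: "pcong p L (ptrunc p a L) (ptrunc p b L)"
  shows "\<forall>n<L. psub p a b n = 0"
proof -
  have p0: "p > 0" using p1 by simp
  note sp = psub_spec[OF p1 a b]
  obtain M where M: "\<forall>m'\<ge>M. pcong p L (ptrunc p (psub p a b) L) (ptrunc p a m' - ptrunc p b m')"
    using sp by blast
  define m' where "m' = max M L"
  have 1: "pcong p L (ptrunc p (psub p a b) L) (ptrunc p a m' - ptrunc p b m')" using M unfolding m'_def by simp
  have 2: "pcong p L (ptrunc p a m' - ptrunc p b m') (ptrunc p a L - ptrunc p b L)"
    using pcong_diff[OF ptrunc_mono[OF p0 a] ptrunc_mono[OF p0 b]] unfolding m'_def by simp
  have 3: "pcong p L (ptrunc p a L - ptrunc p b L) 0" using c by (subst (asm) pcong_0_iff)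
  have "pcong p L (ptrunc p (psub p a b) L) 0" using pcong_trans[OF pcong_trans[OF 1 2] 3] .
  then show ?thesis using ptrunc_zero_below[OF p1] sp by blast
qed



lemma pchar_cis: "pchar p c = cis (2 * pi * pfrac p c)"
  unfolding pchar_def cis_conv_exp by (simp add: mult_ac)

lemma cis_shift: "r - s = of_int k \<Longrightarrow> cis (2 * pi * r) = cis (2 * pi * s)"
proof -
  assume "r - s = of_int k"
  then have "2 * pi * r = 2 * pi * s + 2 * pi * of_int k" by (simp add: algebra_simps)
  then have "cis (2 * pi * r) = cis (2 * pi * s) * cis (2 * pi * of_int k)" by (simp add: cis_mult[symmetric])
  also have "cis (2 * pi * of_int k) = 1" by (rule cis_multiple_2pi) simp
  finally show ?thesis by simp
qed

lemma pabs_le: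
  assumes p1: "p > 1" and c: "padic p c" and z: "\<forall>n<L. c n = 0"
  shows "pabs p c \<le> real p powi (- L)"
proof (cases "\<forall>n. c n = 0")
  case True then show ?thesis unfolding pabs_def using p1 by simp
next
  case False
  then obtain n1 where n1: "c n1 \<noteq> 0" by auto
  obtain l where l: "c l \<noteq> 0" "\<forall>n<l. c n = 0" using int_least[of "\<lambda>n. c n \<noteq> 0" n1 L] n1 z by blast
  have Ll: "(LEAST n. c n \<noteq> 0) = l"
    by (rule Least_equality) (use l in \<open>auto simp: not_less[symmetric]\<close>)
  have "L \<le> l" using l z by force
  then have "real p powi (- l) \<le> real p powi (- L)" using p1 by (intro power_int_increasing) auto
  then show ?thesis unfolding pabs_def using False Ll by simp
qed

lemma val_step:
  assumes pr: "prime p" and u: "T = of_int u * pp p powi v" "\<not> int p dvd u"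
    and c1: "pcong p (-1) (T * Dl) 0" and c2: "pcong p N' Dl 0"
  shows "pcong p (-1 - v) Dl 0"
proof (cases "N' \<ge> -1 - v")
  case True
  have p0: "p > 0" using pr by (simp add: prime_gt_0_nat)
  show ?thesis using pcong_mono[OF p0 True c2] .
next
  case False
  have p0: "p > 0" using pr by (simp add: prime_gt_0_nat)
  define d where "d = nat (-1 - v - N')"
  have dd: "-1 - v = N' + int d" unfolding d_def using False by simp
  obtain z where z: "Dl = of_int z * pp p powi N'" using c2 unfolding pcong_def by auto
  obtain t where t: "T * Dl = of_int t * pp p powi (-1)" using c1 unfolding pcong_def by auto
  have "of_int (u * z) * pp p powi (v + N') = (of_int t * pp p powi (-1) :: rat)"
    using t unfolding u z using p0 by (simp add: power_int_add mult_ac)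
  then have "(of_int (u * z) :: rat) = of_int t * pp p powi (-1 - v - N')"
    using p0 by (simp add: power_int_diff field_simps)
  also have "pp p powi (-1 - v - N') = pp p ^ d" unfolding d_def using False
    by (simp add: power_int_of_nat[symmetric])
  finally have "u * z = t * int p ^ d" by (metis of_int_eq_iff of_int_mult of_int_of_nat_eq of_int_power)
  then have "int p ^ d dvd u * z" by simp
  moreover have "coprime (int p ^ d) u" using pr u(2) by (simp add: prime_imp_coprime_int)
  ultimately have "int p ^ d dvd z" using coprime_dvd_mult_right_iff by blast
  then obtain s where s: "z = int p ^ d * s" by (auto elim: dvdE)
  have "Dl = of_int s * pp p powi (-1 - v)"
    unfolding z s dd using p0 by (simp add: power_int_add power_int_of_nat mult_ac)
  then show ?thesis unfolding pcong_def by auto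
qed


lemma map_poly_of_int_monom: "map_poly (of_int :: int \<Rightarrow> 'a::comm_ring_1) (monom c n) = monom (of_int c) n"
  by (rule poly_eqI) (simp add: coeff_map_poly coeff_monom)

lemma poly_of_int_sum_monom:
  "finite A \<Longrightarrow> poly (map_poly (of_int::int\<Rightarrow>'a::comm_ring_1) (\<Sum>k\<in>A. monom (c k) (e k))) z = (\<Sum>k\<in>A. of_int (c k) * z ^ e k)"
  by (induction A rule: finite_induct) (simp_all add: map_poly_of_int_add map_poly_of_int_monom poly_monom)

lemma zeta_Phi:
  assumes p2: "p \<ge> 2" and D: "D \<ge> 1"
  shows "poly (map_poly of_int (Phi p (p ^ (D - 1)))) (cis (2 * pi / real (p ^ D))) = 0"
proof -
  define M where "M = p ^ (D - 1)"
  define \<zeta> where "\<zeta> = cis (2 * pi / real (p ^ D))"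
  define \<omega> where "\<omega> = cis (2 * pi / real p)"
  have pM: "p ^ D = p * M" unfolding M_def using D by (metis Suc_diff_1 less_le_trans zero_less_one power_Suc)
  have zM: "\<zeta> ^ M = \<omega>"
  proof -
    have "M > 0" unfolding M_def using p2 by simp
    then have "real M * (2 * pi / real (p ^ D)) = 2 * pi / real p" using p2 unfolding pM by (simp add: field_simps)
    then show ?thesis unfolding \<zeta>_def \<omega>_def DeMoivre by simp
  qed
  have wp: "\<omega> ^ p = 1" unfolding \<omega>_def DeMoivre using p2 by simp
  have w1: "\<omega> \<noteq> 1"
  proof
    assume "\<omega> = 1"
    then have "cos (2 * pi / real p) = 1" unfolding \<omega>_def by (metis cis.sel(1) one_complex.sel(1))
    then obtain k :: int where k: "2 * pi / real p = real_of_int k * 2 * pi" by (auto simp: cos_one_2pi_int)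
    then have "2 * pi * (1 / real p) = 2 * pi * real_of_int k" by (simp add: algebra_simps)
    then have "1 / real p = real_of_int k" using pi_gt_zero by (metis mult_left_cancel mult_eq_0_iff zero_neq_numeral less_irrefl)
    moreover have "0 < 1 / real p" "1 / real p < 1" using p2 by auto
    ultimately have "0 < k" "k < 1" by simp_all
    then show False by simp
  qed
  have "poly (map_poly of_int (Phi p M)) \<zeta> = (\<Sum>t<p. \<zeta> ^ (t * M))"
    unfolding Phi_def by (subst poly_of_int_sum_monom) simp_all
  also have "\<dots> = (\<Sum>t<p. \<omega> ^ t)" unfolding zM[symmetric]
    by (intro sum.cong refl) (metis power_mult mult.commute)
  finally have e: "poly (map_poly of_int (Phi p M)) \<zeta> = (\<Sum>t<p. \<omega> ^ t)" .
  have "(1 - \<omega>) * (\<Sum>t<p. \<omega> ^ t) = 0" using one_diff_power_eq[of \<omega> p] wp by simp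
  then have "(\<Sum>t<p. \<omega> ^ t) = 0" using w1 by simp
  then show ?thesis using e unfolding M_def \<zeta>_def by simp
qed


lemma mod_shift_ne:
  fixes a M q :: nat
  assumes "a < q" "0 < M" "M < q"
  shows "(a + M) mod q \<noteq> a"
proof (cases "a + M < q")
  case True then show ?thesis using assms by simp
next
  case False
  then have "(a + M) mod q = (a + M - q) mod q" by (simp add: le_mod_geq)
  also have "\<dots> = a + M - q" using assms False by simp
  finally show ?thesis using assms False by simp
qed

theorem mainTheorem6:
  fixes p :: nat and E :: "(int \<Rightarrow> int) set" and \<alpha> :: "(int \<Rightarrow> int) \<Rightarrow> int"
    and \<xi> :: "int \<Rightarrow> int"
  assumes "prime p"
    and "finite E" and "E \<noteq> {}" and "\<forall>x\<in>E. padic p x"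
    and "\<forall>x\<in>E. \<alpha> x \<noteq> 0"
    and "padic p \<xi>" and "\<xi> \<noteq> (\<lambda>_. 0)"
    and "nu_hat p E \<alpha> \<xi> = 0"
  shows "\<forall>x\<in>E. \<exists>x'\<in>E. x' \<noteq> x \<and> pabs p (psub p x x') \<le> real p / pabs p \<xi>"
proof
  fix x assume xE: "x \<in> E"
  note pr = assms(1)
  have p1: "p > 1" using prime_gt_1_nat[OF pr] .
  have p0: "p > 0" using p1 by simp
  have p2: "p \<ge> 2" using pr by (simp add: prime_ge_2_nat)
  obtain N\<xi> where N\<xi>: "\<forall>n<N\<xi>. \<xi> n = 0" using padic_lb[OF assms(6)] by blast
  obtain n1 where n1: "\<xi> n1 \<noteq> 0" using assms(7) by auto
  obtain v where v: "\<xi> v \<noteq> 0" "\<forall>n<v. \<xi> n = 0"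
    using int_least[of "\<lambda>n. \<xi> n \<noteq> 0" n1 N\<xi>] n1 N\<xi> by blast
  have Lv: "(LEAST n. \<xi> n \<noteq> 0) = v"
    by (rule Least_equality) (use v in \<open>auto simp: not_less[symmetric]\<close>)
  have pabsxi: "pabs p \<xi> = real p powi (- v)" unfolding pabs_def using v(1) Lv by auto
  have ex1: "\<forall>y\<in>E. \<exists>N. \<forall>n<N. y n = 0" using assms(4) padic_lb by blast
  obtain Nf where Nf: "\<forall>y\<in>E. \<forall>n<Nf y. y n = 0" using bchoice[OF ex1] by blast
  have ex2: "\<forall>y\<in>E. \<exists>M. \<forall>m'\<ge>M. pcong p 0 (ptrunc p (pmult p \<xi> y) 0) (ptrunc p \<xi> m' * ptrunc p y m')"
    using pmult_spec[OF p1 assms(6)] assms(4) by blast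
  obtain Mf where Mf: "\<forall>y\<in>E. \<forall>m'\<ge>Mf y. pcong p 0 (ptrunc p (pmult p \<xi> y) 0) (ptrunc p \<xi> m' * ptrunc p y m')"
    using bchoice[OF ex2] by blast
  define m0 where "m0 = max (Max (insert 0 (Mf ` E))) (\<bar>v\<bar> + 1)"
  have m0M: "Mf y \<le> m0" if "y \<in> E" for y
  proof -
    have "Mf y \<le> Max (insert 0 (Mf ` E))" using that assms(2) by (intro Max_ge) auto
    then show ?thesis unfolding m0_def by simp
  qed
  have m0v: "v + 1 \<le> m0" "- 1 - v \<le> m0" unfolding m0_def by auto
  define T where "T y = ptrunc p y m0" for y
  define r where "r y = T \<xi> * T y" for y
  have rk: "\<exists>k. ptrunc p (pmult p \<xi> y) 0 - r y = of_int k" if "y \<in> E" for y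
    using Mf that m0M[OF that] unfolding pcong_def r_def T_def by simp
  define e0 where "e0 = Min (insert 0 ((\<lambda>y. v + Nf y) ` E))"
  have e0: "e0 \<le> v + Nf y" if "y \<in> E" for y unfolding e0_def using that assms(2) by (intro Min_le) auto
  have e00: "e0 \<le> 0" unfolding e0_def using assms(2) by (intro Min_le) auto
  define D where "D = nat (1 - e0)"
  have D1: "D \<ge> 1" unfolding D_def using e00 by simp
  have De: "- int D \<le> e0" unfolding D_def using e00 by simp
  have rlb: "pcong p (- int D) (r y) 0" if "y \<in> E" for y
  proof -
    have a: "pcong p v (T \<xi>) 0" unfolding T_def by (rule ptrunc_lb[OF p0]) (use v in auto)
    have b: "pcong p (Nf y) (T y) 0" unfolding T_def by (rule ptrunc_lb[OF p0]) (use Nf that in auto)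
    show ?thesis unfolding r_def by (rule pcong_mono[OF p0 _ pcong_mult0[OF p0 a b]]) (use e0[OF that] De in simp)
  qed
  have ex3: "\<forall>y\<in>E. \<exists>w. r y = of_int w * pp p powi (- int D)" using rlb unfolding pcong_def by auto
  obtain w where w: "\<forall>y\<in>E. r y = of_int (w y) * pp p powi (- int D)" using bchoice[OF ex3] by blast
  define q where "q = p ^ D"
  define M where "M = p ^ (D - 1)"
  have qM: "q = p * M" unfolding q_def M_def using D1 by (metis Suc_diff_1 less_le_trans zero_less_one power_Suc)
  have M1: "M \<ge> 1" unfolding M_def using p2 by simp
  have q0: "q > 0" unfolding q_def using p0 by simp
  have Mq: "M < q" using qM M1 p2 by simp
  define j where "j y = nat ((- w y) mod int q)" for y
  have jq: "j y < q" for y unfolding j_def using q0 by (simp add: nat_less_iff)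
  have jw: "int (j y) = (- w y) mod int q" for y unfolding j_def using q0 by simp
  define \<zeta> where "\<zeta> = cis (2 * pi / real q)"
  have char: "cnj (pchar p (pmult p \<xi> y)) = \<zeta> ^ j y" if yy: "y \<in> E" for y
  proof -
    obtain k where k: "ptrunc p (pmult p \<xi> y) 0 - r y = of_int k" using rk[OF yy] by blast
    have 1: "pchar p (pmult p \<xi> y) = cis (2 * pi * real_of_rat (r y))"
      unfolding pchar_cis pfrac_def
    proof (rule cis_shift[of _ _ k])
      have "real_of_rat (ptrunc p (pmult p \<xi> y) 0 - r y) = real_of_int k" by (simp only: k of_rat_of_int_eq)
      then show "real_of_rat (ptrunc p (pmult p \<xi> y) 0) - real_of_rat (r y) = real_of_int k" by (simp add: of_rat_diff)
    qed
    have rq: "r y = of_int (w y) / of_nat q"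
      using w yy p0 unfolding q_def by (simp add: power_int_minus power_int_of_nat divide_inverse)
    have rr: "real_of_rat (r y) = real_of_int (w y) / real q"
      unfolding rq by (simp add: of_rat_divide)
    define t where "t = (- w y) div int q"
    have wt: "- w y = int (j y) + int q * t" unfolding jw t_def by simp
    have "cnj (pchar p (pmult p \<xi> y)) = cis (2 * pi * (- real_of_rat (r y)))" using 1 by (simp add: cis_cnj)
    also have "\<dots> = cis (2 * pi * (real (j y) / real q))"
    proof (rule cis_shift[of _ _ t])
      have "- real_of_int (w y) = real (j y) + real q * real_of_int t"
        using arg_cong[OF wt, of real_of_int] by simp
      then show "- real_of_rat (r y) - real (j y) / real q = real_of_int t"
        unfolding rr using q0 by (simp add: field_simps)
    qed
    also have "\<dots> = \<zeta> ^ j y" unfolding \<zeta>_def DeMoivre by (simp add: field_simps)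
    finally show ?thesis .
  qed
  have sum0: "(\<Sum>y\<in>E. of_int (\<alpha> y) * \<zeta> ^ j y) = 0"
  proof -
    have "(\<Sum>y\<in>E. of_int (\<alpha> y) * cnj (pchar p (pmult p \<xi> y))) = (\<Sum>y\<in>E. of_int (\<alpha> y) * \<zeta> ^ j y)"
      by (rule sum.cong) (simp_all add: char)
    then show ?thesis using assms(8) unfolding nu_hat_def by simp
  qed
  define A where "A k = (\<Sum>y\<in>E. if j y = k then \<alpha> y else 0)" for k
  define P where "P = (\<Sum>k<q. monom (A k) k)"
  have evP: "poly (map_poly of_int P) \<zeta> = 0"
  proof -
    have "poly (map_poly of_int P) \<zeta> = (\<Sum>k<q. of_int (A k) * \<zeta> ^ k)"
      unfolding P_def by (rule poly_of_int_sum_monom) simp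
    also have "\<dots> = (\<Sum>k<q. \<Sum>y\<in>E. (if k = j y then of_int (\<alpha> y) * \<zeta> ^ k else 0))"
      unfolding A_def of_int_sum sum_distrib_right by (intro sum.cong refl) auto
    also have "\<dots> = (\<Sum>y\<in>E. \<Sum>k<q. (if k = j y then of_int (\<alpha> y) * \<zeta> ^ k else 0))"
      by (rule sum.swap)
    also have "\<dots> = (\<Sum>y\<in>E. of_int (\<alpha> y) * \<zeta> ^ j y)" using jq by simp
    finally show ?thesis using sum0 by simp
  qed
  have cP: "coeff P k = A k" if "k < q" for k
    unfolding P_def using that by (simp add: coeff_sum coeff_monom)
  have degP: "degree P < p * M"
  proof -
    have "coeff P k = 0" if "k > q - 1" for k
      unfolding P_def coeff_sum coeff_monom using that by (intro sum.neutral) auto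
    then have "degree P \<le> q - 1" by (intro degree_le) auto
    then show ?thesis using qM q0 by linarith
  qed
  have pe: "prime_elem (Phi p M)" unfolding M_def
    by (rule irreducible_imp_prime_poly[OF Phi_irreducible[OF pr D1]])
  have zPhi: "poly (map_poly of_int (Phi p M)) \<zeta> = 0"
    unfolding M_def \<zeta>_def q_def using zeta_Phi[OF p2 D1] .
  have per: "A k1 = A k2" if "k1 < q" "k2 < q" "k1 mod M = k2 mod M" for k1 k2
  proof -
    have "coeff P k1 = coeff P k2" by (rule periodic[OF pe zPhi _ M1 evP degP]) (use that qM p1 in auto)
    then show ?thesis using cP that by simp
  qed
  have "\<exists>y\<in>E. y \<noteq> x \<and> j y mod M = j x mod M"
  proof (cases "A (j x) = 0")
    case True
    show ?thesis
    proof (rule ccontr)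
      assume "\<not> ?thesis"
      then have ne: "\<forall>y\<in>E - {x}. j y \<noteq> j x" by auto
      have "A (j x) = \<alpha> x + (\<Sum>y\<in>E - {x}. if j y = j x then \<alpha> y else 0)"
        unfolding A_def by (subst sum.remove[OF assms(2) xE]) simp
      also have "(\<Sum>y\<in>E - {x}. if j y = j x then \<alpha> y else 0) = 0" using ne by (intro sum.neutral) auto
      finally show False using True assms(5) xE by simp
    qed
  next
    case False
    define k1 where "k1 = (j x + M) mod q"
    have k1q: "k1 < q" unfolding k1_def using q0 by simp
    have Mdq: "M dvd q" unfolding qM by simp
    have k1M: "k1 mod M = j x mod M" unfolding k1_def using Mdq by (simp add: mod_mod_cancel)
    have k1ne: "k1 \<noteq> j x" unfolding k1_def using mod_shift_ne[OF jq _ Mq] M1 by simp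
    have "A k1 \<noteq> 0" using per[OF k1q jq k1M] False by simp
    have "\<exists>y\<in>E. j y = k1"
    proof (rule ccontr)
      assume "\<not> (\<exists>y\<in>E. j y = k1)"
      then have "A k1 = 0" unfolding A_def by (intro sum.neutral) auto
      then show False using \<open>A k1 \<noteq> 0\<close> by simp
    qed
    then obtain y where "y \<in> E" "j y = k1" by blast
    then show ?thesis using k1ne k1M by auto
  qed
  then obtain y where yE: "y \<in> E" and yx: "y \<noteq> x" and jm: "j y mod M = j x mod M" by blast
  have Mw: "int M dvd (w x - w y)"
  proof -
    have "int (j y mod M) = int (j x mod M)" using jm by simp
    then have "int (j y) mod int M = int (j x) mod int M" by (simp only: zmod_int)
    then have d1: "int M dvd int (j y) - int (j x)" by (simp add: mod_eq_dvd_iff)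
    have "int q dvd int (j z) + w z" for z
    proof -
      have "int (j z) = (- w z) mod int q" by (rule jw)
      moreover have "(- w z) mod int q + w z = - ((- w z) div int q * int q)"
        using div_mult_mod_eq[of "- w z" "int q"] by linarith
      ultimately show ?thesis by simp
    qed
    moreover have "int M dvd int q" unfolding qM by simp
    ultimately have d2: "int M dvd int (j x) + w x" "int M dvd int (j y) + w y" using dvd_trans by blast+
    have "w x - w y = (int (j x) + w x) - (int (j y) + w y) + (int (j y) - int (j x))" by simp
    moreover have "int M dvd (int (j x) + w x) - (int (j y) + w y) + (int (j y) - int (j x))"
      by (rule dvd_add[OF dvd_diff[OF d2(1) d2(2)] d1])
    ultimately show ?thesis by simp
  qed
  then obtain t where t: "w x - w y = int M * t" by (auto elim: dvdE)
  have rdiff: "r x - r y = of_int t * pp p powi (-1)"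
  proof -
    have "r x - r y = of_int (w x - w y) * pp p powi (- int D)" using w xE yE by (simp add: algebra_simps)
    also have "\<dots> = of_int t * (pp p ^ (D - 1) * pp p powi (- int D))" unfolding t M_def by simp
    also have "pp p ^ (D - 1) * pp p powi (- int D) = pp p powi (-1)"
    proof -
      have "pp p ^ (D - 1) = pp p powi (int D - 1)" using D1 by (simp add: power_int_of_nat[symmetric] of_nat_diff)
      then show ?thesis using p0 by (simp add: power_int_add[symmetric])
    qed
    finally show ?thesis .
  qed
  have c1: "pcong p (-1) (T \<xi> * (T x - T y)) 0"
    unfolding pcong_def using rdiff by (auto simp: r_def algebra_simps)
  have "pcong p v (T \<xi>) 0" unfolding T_def by (rule ptrunc_lb[OF p0]) (use v in auto)
  then obtain u where u: "T \<xi> = of_int u * pp p powi v" unfolding pcong_def by auto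
  have nu: "\<not> int p dvd u"
  proof
    assume "int p dvd u"
    then obtain u' where u': "u = int p * u'" by (auto elim: dvdE)
    have "T \<xi> - 0 = of_int u' * pp p powi (v + 1)" unfolding u u' using p0 by (simp add: power_int_add mult_ac)
    then have a: "pcong p (v + 1) (T \<xi>) 0" unfolding pcong_def by blast
    have b: "pcong p (v + 1) (T \<xi>) (ptrunc p \<xi> (v + 1))" unfolding T_def by (rule ptrunc_mono[OF p0 assms(6) m0v(1)])
    have "pcong p (v + 1) (ptrunc p \<xi> (v + 1)) 0" using pcong_trans[OF pcong_sym[OF b] a] .
    then have "\<forall>n<v+1. \<xi> n = 0" by (rule ptrunc_zero_below[OF p1 assms(6)])
    then show False using v(1) by simp
  qed
  have c2: "pcong p (min (Nf x) (Nf y)) (T x - T y) 0"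
  proof -
    have 1: "pcong p (min (Nf x) (Nf y)) (T x) 0" unfolding T_def by (rule ptrunc_lb[OF p0]) (use Nf xE in auto)
    have 2: "pcong p (min (Nf x) (Nf y)) (T y) 0" unfolding T_def by (rule ptrunc_lb[OF p0]) (use Nf yE in auto)
    show ?thesis using pcong_diff[OF 1 2] by simp
  qed
  have c3: "pcong p (-1 - v) (T x - T y) 0" by (rule val_step[OF pr u nu c1 c2])
  have xp: "padic p x" and yp: "padic p y" using assms(4) xE yE by auto
  have c4: "pcong p (-1 - v) (ptrunc p x (-1 - v)) (ptrunc p y (-1 - v))"
  proof -
    have 1: "pcong p (-1 - v) (T x) (ptrunc p x (-1 - v))" unfolding T_def by (rule ptrunc_mono[OF p0 xp m0v(2)])
    have 2: "pcong p (-1 - v) (T y) (ptrunc p y (-1 - v))" unfolding T_def by (rule ptrunc_mono[OF p0 yp m0v(2)])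
    have "pcong p (-1 - v) (ptrunc p x (-1 - v) - ptrunc p y (-1 - v)) (T x - T y)"
      using pcong_diff[OF pcong_sym[OF 1] pcong_sym[OF 2]] .
    then have "pcong p (-1 - v) (ptrunc p x (-1 - v) - ptrunc p y (-1 - v)) 0" using c3 by (rule pcong_trans)
    then show ?thesis by (subst pcong_0_iff)
  qed
  have z: "\<forall>n < -1 - v. psub p x y n = 0" by (rule psub_small[OF p1 xp yp c4])
  have "pabs p (psub p x y) \<le> real p powi (- (-1 - v))"
    by (rule pabs_le[OF p1 _ z]) (use psub_spec[OF p1 xp yp] in blast)
  moreover have "real p / pabs p \<xi> = real p powi (- (-1 - v))"
    unfolding pabsxi using p0 by (simp add: power_int_minus power_int_add_1' divide_inverse)
  ultimately show "\<exists>x'\<in>E. x' \<noteq> x \<and> pabs p (psub p x x') \<le> real p / pabs p \<xi>" using yE yx by auto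
qed


end
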